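(* Let $G$ be a graph having a component with at least two cycles, and let $F$ be a subgraph of $G$. The following are equivalent: (a1) $F=[G]$, the core of $G$; (a2) $F$ is the unique maximum (with respect to the subgraph relation) element among the subgraphs of $G$ that are cacti-graphs; (a3) letting $G'$ be the graph obtained from $G$ by removing all tree components, $F$ is the only subgraph of $G$ that is a cacti-graph and satisfies $\Delta F=\Delta G'$.
   Context: Graphs are finite, may have loops and parallel edges, and have no isolated vertices unless stated otherwise. A leaf is a vertex incident to exactly one edge, which is not a loop. $\Delta G=|E(G)|-|V(G)|$. For $X\subseteq E(G)$, $G\langle X\rangle$ is the subgraph with edge set $X$ and vertex set the vertices incident to edges of $X$. A cycle is a connected graph all of whose vertices have degree 2 (a loop contributes 2). A cacti-graph is a graph with no isolated vertices, no leaves, and no component that is a cycle. For a connected graph $A$ containing a cycle, its kernel $\lfloor A\rfloor$ is the subgraph obtained from $A$ by repeatedly deleting leaves (with their incident edges) until no leaf remains; equivalently $\lfloor A\rfloor=A\langle X\rangle$ where $X$ is the inclusion-minimum nonempty subset of $E(A)$ with $\Delta A\langle X\rangle=\Delta A$. If $G$ has a component with at least two cycles, the core $[G]$ of $G$ is the union of the kernels $\lfloor A\rfloor$ over the components $A$ of $G$ with $\Delta A\ge1$ (i.e. with at least two cycles). *)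

theory Defs
  imports Main
begin

text \<open>A multigraph is given by an incidence map ends :: 'e => 'v set (each edge has
one endpoint (a loop) or two endpoints) and a finite edge set E.  Since graphs have no
isolated vertices, a graph is determined by its edge set: the graph G<X> has edge set X
and vertex set the vertices incident to X.  Subgraphs (without isolated vertices)
of G<E> are exactly the G<X> with X a subset of E, and the subgraph relation is inclusion.\<close>

definition multigraph :: "('e \<Rightarrow> 'v set) \<Rightarrow> 'e set \<Rightarrow> bool" where
  "multigraph ends E \<longleftrightarrow> finite E \<and> (\<forall>e\<in>E. card (ends e) = 1 \<or> card (ends e) = 2)"

definition verts :: "('e \<Rightarrow> 'v set) \<Rightarrow> 'e set \<Rightarrow> 'v set" where
  "verts ends X = (\<Union>e\<in>X. ends e)"

definition Delta :: "('e \<Rightarrow> 'v set) \<Rightarrow> 'e set \<Rightarrow> int" where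
  "Delta ends X = int (card X) - int (card (verts ends X))"

definition is_loop :: "('e \<Rightarrow> 'v set) \<Rightarrow> 'e \<Rightarrow> bool" where
  "is_loop ends e \<longleftrightarrow> card (ends e) = 1"

definition degree :: "('e \<Rightarrow> 'v set) \<Rightarrow> 'e set \<Rightarrow> 'v \<Rightarrow> nat" where
  "degree ends X v = card {e\<in>X. v \<in> ends e \<and> \<not> is_loop ends e}
                     + 2 * card {e\<in>X. v \<in> ends e \<and> is_loop ends e}"

definition is_leaf :: "('e \<Rightarrow> 'v set) \<Rightarrow> 'e set \<Rightarrow> 'v \<Rightarrow> bool" where
  "is_leaf ends X v \<longleftrightarrow> (\<exists>e\<in>X. {f\<in>X. v \<in> ends f} = {e} \<and> \<not> is_loop ends e)"

text \<open>two edges of X are adjacent if they share a vertex; connectivity of edges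
(for graphs without isolated vertices this is connectivity of the graph)\<close>
definition adj :: "('e \<Rightarrow> 'v set) \<Rightarrow> 'e set \<Rightarrow> ('e \<times> 'e) set" where
  "adj ends X = {(e, f). e \<in> X \<and> f \<in> X \<and> ends e \<inter> ends f \<noteq> {}}"

definition connected_graph :: "('e \<Rightarrow> 'v set) \<Rightarrow> 'e set \<Rightarrow> bool" where
  "connected_graph ends X \<longleftrightarrow> X \<noteq> {} \<and> (\<forall>e\<in>X. \<forall>f\<in>X. (e, f) \<in> (adj ends X)\<^sup>+)"

definition components :: "('e \<Rightarrow> 'v set) \<Rightarrow> 'e set \<Rightarrow> 'e set set" where
  "components ends X = {{f. (e, f) \<in> (adj ends X)\<^sup>+} | e. e \<in> X}"

definition is_cycle :: "('e \<Rightarrow> 'v set) \<Rightarrow> 'e set \<Rightarrow> bool" where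
  "is_cycle ends X \<longleftrightarrow> connected_graph ends X \<and> (\<forall>v\<in>verts ends X. degree ends X v = 2)"

definition has_cycle :: "('e \<Rightarrow> 'v set) \<Rightarrow> 'e set \<Rightarrow> bool" where
  "has_cycle ends X \<longleftrightarrow> (\<exists>Y\<subseteq>X. is_cycle ends Y)"

definition has_two_cycles :: "('e \<Rightarrow> 'v set) \<Rightarrow> 'e set \<Rightarrow> bool" where
  "has_two_cycles ends X \<longleftrightarrow> (\<exists>Y1 Y2. Y1 \<subseteq> X \<and> Y2 \<subseteq> X \<and> Y1 \<noteq> Y2 \<and>
      is_cycle ends Y1 \<and> is_cycle ends Y2)"

text \<open>cacti-graph: no isolated vertices (automatic), no leaves, no component a cycle\<close>
definition cacti :: "('e \<Rightarrow> 'v set) \<Rightarrow> 'e set \<Rightarrow> bool" where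
  "cacti ends X \<longleftrightarrow> (\<forall>v\<in>verts ends X. \<not> is_leaf ends X v)
      \<and> (\<forall>A\<in>components ends X. \<not> is_cycle ends A)"

definition kernel :: "('e \<Rightarrow> 'v set) \<Rightarrow> 'e set \<Rightarrow> 'e set" where
  "kernel ends A = (THE X. X \<subseteq> A \<and> X \<noteq> {} \<and> Delta ends X = Delta ends A \<and>
      (\<forall>Y. Y \<subseteq> A \<and> Y \<noteq> {} \<and> Delta ends Y = Delta ends A \<longrightarrow> X \<subseteq> Y))"

definition core :: "('e \<Rightarrow> 'v set) \<Rightarrow> 'e set \<Rightarrow> 'e set" where
  "core ends E = (\<Union>A\<in>{A\<in>components ends E. has_two_cycles ends A}. kernel ends A)"

definition remove_trees :: "('e \<Rightarrow> 'v set) \<Rightarrow> 'e set \<Rightarrow> 'e set" where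
  "remove_trees ends E = \<Union>{A\<in>components ends E. has_cycle ends A}"

end

theory Submission
  imports Defs
begin



locale mg =
  fixes ends :: "'e \<Rightarrow> 'v set" and E :: "'e set"
  assumes mg: "multigraph ends E"
begin

definition inc :: "'e set \<Rightarrow> 'v \<Rightarrow> 'e set" where
  "inc X v = {e\<in>X. v \<in> ends e}"

definition closed :: "'e set \<Rightarrow> 'e set \<Rightarrow> bool" where
  "closed C Y \<longleftrightarrow> C \<subseteq> Y \<and> (\<forall>e\<in>C. \<forall>f\<in>Y. ends e \<inter> ends f \<noteq> {} \<longrightarrow> f \<in> C)"

definition comp :: "'e set \<Rightarrow> 'e \<Rightarrow> 'e set" where
  "comp X e = {f. (e, f) \<in> (adj ends X)\<^sup>+}"

lemma finE: "finite E" using mg by (simp add: multigraph_def)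

lemma ends_card: "e \<in> E \<Longrightarrow> card (ends e) = 1 \<or> card (ends e) = 2"
  using mg by (simp add: multigraph_def)

lemma ends_fin: "e \<in> E \<Longrightarrow> finite (ends e)"
  using ends_card by (metis card.infinite zero_neq_numeral zero_neq_one)

lemma ends_ne: "e \<in> E \<Longrightarrow> ends e \<noteq> {}"
  using ends_card by fastforce

lemma ends_le2: "e \<in> E \<Longrightarrow> card (ends e) \<le> 2"
  using ends_card by fastforce

lemma fin_sub: "X \<subseteq> E \<Longrightarrow> finite X"
  using finE finite_subset by blast

lemma verts_fin: "X \<subseteq> E \<Longrightarrow> finite (verts ends X)"
  unfolding verts_def using fin_sub ends_fin by blast

lemma verts_Un: "verts ends (X \<union> Y) = verts ends X \<union> verts ends Y"
  by (auto simp: verts_def)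

lemma verts_mono: "X \<subseteq> Y \<Longrightarrow> verts ends X \<subseteq> verts ends Y"
  by (auto simp: verts_def)

lemma verts_empty[simp]: "verts ends {} = {}" by (simp add: verts_def)

lemma verts_insert: "verts ends (insert e X) = ends e \<union> verts ends X"
  by (auto simp: verts_def)

lemma in_vertsI: "e \<in> X \<Longrightarrow> v \<in> ends e \<Longrightarrow> v \<in> verts ends X"
  by (auto simp: verts_def)

lemma Delta_empty[simp]: "Delta ends {} = 0" by (simp add: Delta_def)

lemma disj_edges:
  assumes "X \<subseteq> E" "verts ends X \<inter> verts ends Y = {}"
  shows "X \<inter> Y = {}"
proof (rule ccontr)
  assume "X \<inter> Y \<noteq> {}"
  then obtain e where e: "e \<in> X" "e \<in> Y" by blast
  then obtain v where "v \<in> ends e" using ends_ne assms(1) by blast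
  then show False using e assms(2) in_vertsI by blast
qed

lemma Delta_Un_disj:
  assumes "X \<subseteq> E" "Y \<subseteq> E" "verts ends X \<inter> verts ends Y = {}"
  shows "Delta ends (X \<union> Y) = Delta ends X + Delta ends Y"
proof -
  have "X \<inter> Y = {}" using disj_edges assms by blast
  then have "card (X \<union> Y) = card X + card Y"
    using card_Un_disjoint fin_sub assms by blast
  moreover have "card (verts ends (X \<union> Y)) = card (verts ends X) + card (verts ends Y)"
    unfolding verts_Un using card_Un_disjoint verts_fin assms by blast
  ultimately show ?thesis by (simp add: Delta_def)
qed

lemma Delta_insert:
  assumes "X \<subseteq> E" "e \<in> E" "e \<notin> X"
  shows "Delta ends (insert e X) = Delta ends X + 1 - int (card (ends e - verts ends X))"
proof -
  have "card (insert e X) = card X + 1" using fin_sub[OF assms(1)] assms(3) by simp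
  moreover have vi: "verts ends (insert e X) = verts ends X \<union> (ends e - verts ends X)"
    by (auto simp: verts_insert)
  moreover have "card (verts ends (insert e X)) = card (verts ends X) + card (ends e - verts ends X)"
  proof -
    have "finite (verts ends X)" "finite (ends e - verts ends X)"
      using verts_fin ends_fin assms by auto
    moreover have "verts ends X \<inter> (ends e - verts ends X) = {}" by blast
    ultimately show ?thesis unfolding vi by (rule card_Un_disjoint)
  qed
  ultimately show ?thesis by (simp add: Delta_def)
qed

lemma lost_le1:
  assumes "e \<in> E" "ends e \<inter> S \<noteq> {}"
  shows "card (ends e - S) \<le> 1"
proof -
  obtain a where a: "a \<in> ends e" "a \<in> S" using assms by blast
  have fe: "finite (ends e)" using ends_fin[OF assms(1)] .
  have "ends e - S \<subseteq> ends e - {a}" using a by blast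
  then have "card (ends e - S) \<le> card (ends e - {a})"
    using fe by (intro card_mono) auto
  also have "\<dots> = card (ends e) - 1" using a(1) fe by (simp add: card_Diff_singleton)
  finally show ?thesis using ends_le2[OF assms(1)] by linarith
qed

lemma Delta_insert_adj:
  assumes "X \<subseteq> E" "e \<in> E" "e \<notin> X" "ends e \<inter> verts ends X \<noteq> {}"
  shows "Delta ends X \<le> Delta ends (insert e X)"
  using Delta_insert[OF assms(1-3)] lost_le1[OF assms(2,4)] by linarith

lemma closed_trancl:
  assumes "closed C Y" "(x, y) \<in> (adj ends Y)\<^sup>+" "x \<in> C"
  shows "y \<in> C \<and> (x, y) \<in> (adj ends C)\<^sup>+"
  using assms(2)
proof (induction rule: trancl_induct)
  case (base y)
  then have "y \<in> C" using assms(1,3) unfolding closed_def adj_def by blast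
  then have "(x, y) \<in> adj ends C" using base assms(3) unfolding adj_def by auto
  then show ?case using \<open>y \<in> C\<close> by (simp add: r_into_trancl')
next
  case (step y z)
  then have yC: "y \<in> C" and xy: "(x, y) \<in> (adj ends C)\<^sup>+" by auto
  have "z \<in> C" using step(2) yC assms(1) unfolding closed_def adj_def by blast
  have yz: "(y, z) \<in> adj ends C" using step(2) yC \<open>z \<in> C\<close> unfolding adj_def by auto
  have "(x, z) \<in> (adj ends C)\<^sup>+" using xy yz by (rule trancl_into_trancl)
  then show ?case using \<open>z \<in> C\<close> by simp
qed

lemma conn_closed:
  assumes "connected_graph ends Y" "closed C Y" "C \<noteq> {}"
  shows "C = Y"
proof -
  obtain x where x: "x \<in> C" using assms by blast
  have xY: "x \<in> Y" using x assms(2) closed_def by blast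
  have "y \<in> C" if "y \<in> Y" for y
  proof -
    have "(x, y) \<in> (adj ends Y)\<^sup>+" using assms(1) xY that unfolding connected_graph_def by blast
    then show ?thesis using closed_trancl[OF assms(2) _ x] by blast
  qed
  then show ?thesis using assms(2) closed_def by blast
qed

lemma adj_edge:
  assumes "connected_graph ends Y" "X \<subseteq> Y" "X \<noteq> {}" "X \<noteq> Y"
  shows "\<exists>e\<in>Y - X. ends e \<inter> verts ends X \<noteq> {}"
proof (rule ccontr)
  assume na: "\<not> ?thesis"
  have "closed X Y" unfolding closed_def
  proof (intro conjI ballI impI)
    show "X \<subseteq> Y" by fact
    fix x f assume x: "x \<in> X" and f: "f \<in> Y" and ne: "ends x \<inter> ends f \<noteq> {}"
    show "f \<in> X"
    proof (rule ccontr)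
      assume "f \<notin> X"
      moreover have "ends x \<subseteq> verts ends X" using x by (auto simp: verts_def)
      ultimately show False using na f ne by blast
    qed
  qed
  then show False using conn_closed assms by blast
qed

lemma G1:
  assumes "Y \<subseteq> E" "connected_graph ends Y" "X \<subseteq> Y" "X \<noteq> {}"
  shows "Delta ends X \<le> Delta ends Y"
  using assms(3,4)
proof (induction "card (Y - X)" arbitrary: X rule: less_induct)
  case less
  show ?case
  proof (cases "X = Y")
    case True then show ?thesis by simp
  next
    case False
    then obtain e where e: "e \<in> Y - X" "ends e \<inter> verts ends X \<noteq> {}"
      using adj_edge[OF assms(2) less(2,3)] by blast
    have lt: "card (Y - insert e X) < card (Y - X)"
    proof -
      have eq: "Y - insert e X = (Y - X) - {e}" by blast
      have "finite (Y - X)" using fin_sub[OF assms(1)] by simp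
      then have "card ((Y - X) - {e}) < card (Y - X)" using e(1) by (intro card_Diff1_less)
      then show ?thesis unfolding eq .
    qed
    have "insert e X \<subseteq> Y" "insert e X \<noteq> {}" using e less(2) by auto
    then have "Delta ends (insert e X) \<le> Delta ends Y"
      using less(1)[OF lt] by blast
    moreover have "Delta ends X \<le> Delta ends (insert e X)"
      using Delta_insert_adj[of X e] e less(2) assms(1) by blast
    ultimately show ?thesis by linarith
  qed
qed

end



context mg begin

definition w :: "'e \<Rightarrow> nat" where "w e = (if is_loop ends e then 2 else 1)"

lemma degree_w:
  assumes "finite X"
  shows "degree ends X v = (\<Sum>e\<in>inc X v. w e)"
proof -
  have fi: "finite (inc X v)" using assms by (simp add: inc_def)
  have "(\<Sum>e\<in>inc X v. w e) = (\<Sum>e\<in>inc X v \<inter> {e. is_loop ends e}. 2) + (\<Sum>e\<in>inc X v \<inter> - {e. is_loop ends e}. 1)"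
    unfolding w_def by (rule sum.If_cases[OF fi])
  also have "\<dots> = 2 * card (inc X v \<inter> {e. is_loop ends e}) + card (inc X v \<inter> - {e. is_loop ends e})"
    by simp
  also have "inc X v \<inter> {e. is_loop ends e} = {e\<in>X. v \<in> ends e \<and> is_loop ends e}"
    by (auto simp: inc_def)
  also have "inc X v \<inter> - {e. is_loop ends e} = {e\<in>X. v \<in> ends e \<and> \<not> is_loop ends e}"
    by (auto simp: inc_def)
  finally show ?thesis unfolding degree_def by simp
qed

lemma w_ends: "e \<in> E \<Longrightarrow> w e * card (ends e) = 2"
  using ends_card[of e] by (auto simp: w_def is_loop_def)

lemma handshake:
  assumes "X \<subseteq> E"
  shows "(\<Sum>v\<in>verts ends X. degree ends X v) = 2 * card X"
proof -
  have fX: "finite X" using fin_sub[OF assms] .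
  have fV: "finite (verts ends X)" using verts_fin[OF assms] .
  have "(\<Sum>v\<in>verts ends X. degree ends X v) = (\<Sum>v\<in>verts ends X. \<Sum>e\<in>{e. e \<in> X \<and> v \<in> ends e}. w e)"
    using degree_w[OF fX] by (simp add: inc_def)
  also have "\<dots> = (\<Sum>e\<in>X. \<Sum>v\<in>{v. v \<in> verts ends X \<and> v \<in> ends e}. w e)"
    using sum.swap_restrict[OF fV fX, of "\<lambda>v e. w e" "\<lambda>v e. v \<in> ends e"] by simp
  also have "\<dots> = (\<Sum>e\<in>X. w e * card (ends e))"
  proof (rule sum.cong)
    fix e assume e: "e \<in> X"
    have "{v. v \<in> verts ends X \<and> v \<in> ends e} = ends e" using e by (auto simp: verts_def)
    then show "(\<Sum>v\<in>{v. v \<in> verts ends X \<and> v \<in> ends e}. w e) = w e * card (ends e)" by simp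
  qed simp
  also have "\<dots> = (\<Sum>e\<in>X. 2)"
    using w_ends assms by (intro sum.cong) auto
  finally show ?thesis by simp
qed

lemma inc_ne: "X \<subseteq> E \<Longrightarrow> v \<in> verts ends X \<Longrightarrow> inc X v \<noteq> {}"
  by (auto simp: verts_def inc_def)

lemma degree_pos:
  assumes "X \<subseteq> E" "v \<in> verts ends X"
  shows "1 \<le> degree ends X v"
proof -
  obtain e where e: "e \<in> inc X v" using inc_ne[OF assms] by blast
  have fi: "finite (inc X v)" using fin_sub[OF assms(1)] by (simp add: inc_def)
  have "w e \<le> (\<Sum>e\<in>inc X v. w e)" using e fi by (intro member_le_sum) auto
  moreover have "1 \<le> w e" by (simp add: w_def)
  ultimately show ?thesis using degree_w fin_sub[OF assms(1)] by simp
qed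

lemma degree_nonleaf:
  assumes "X \<subseteq> E" "v \<in> verts ends X" "\<not> is_leaf ends X v"
  shows "2 \<le> degree ends X v"
proof -
  have fi: "finite (inc X v)" using fin_sub[OF assms(1)] by (simp add: inc_def)
  obtain e where e: "e \<in> inc X v" using inc_ne[OF assms(1,2)] by blast
  have ds: "degree ends X v = (\<Sum>e\<in>inc X v. w e)" using degree_w fin_sub[OF assms(1)] by simp
  show ?thesis
  proof (cases "is_loop ends e")
    case True
    then have "w e = 2" by (simp add: w_def)
    moreover have "w e \<le> (\<Sum>e\<in>inc X v. w e)" using e fi by (intro member_le_sum) auto
    ultimately show ?thesis using ds by simp
  next
    case False
    have "inc X v \<noteq> {e}"
    proof
      assume "inc X v = {e}"
      then have "{f\<in>X. v \<in> ends f} = {e}" by (simp add: inc_def)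
      moreover have "e \<in> X" using e by (simp add: inc_def)
      ultimately have "is_leaf ends X v" using False unfolding is_leaf_def by blast
      then show False using assms(3) by simp
    qed
    then obtain f where f: "f \<in> inc X v" "f \<noteq> e" using e by blast
    have "(\<Sum>e\<in>{e, f}. w e) \<le> (\<Sum>e\<in>inc X v. w e)"
      using e f fi by (intro sum_mono2) auto
    moreover have "(\<Sum>e\<in>{e, f}. w e) = w e + w f" using f by simp
    moreover have "1 \<le> w e" "1 \<le> w f" by (simp_all add: w_def)
    ultimately show ?thesis using ds by simp
  qed
qed

lemma leaf_ends:
  assumes "is_leaf ends X v"
  obtains e where "e \<in> X" "v \<in> ends e" "\<not> is_loop ends e" "\<And>f. f \<in> X \<Longrightarrow> v \<in> ends f \<Longrightarrow> f = e"
  using assms unfolding is_leaf_def by blast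

lemma inc_eq_leaf_degree:
  assumes "inc X v = inc Y v"
  shows "degree ends X v = degree ends Y v" "is_leaf ends X v = is_leaf ends Y v"
proof -
  have *: "{e\<in>X. v \<in> ends e \<and> P e} = {e\<in>Y. v \<in> ends e \<and> P e}" for P
    using assms unfolding inc_def by blast
  show "degree ends X v = degree ends Y v" unfolding degree_def using *[of "\<lambda>e. is_loop ends e"] *[of "\<lambda>e. \<not> is_loop ends e"] by simp
  show "is_leaf ends X v = is_leaf ends Y v"
  proof -
    have "{f\<in>X. v \<in> ends f} = {f\<in>Y. v \<in> ends f}" using assms unfolding inc_def by blast
    then show ?thesis unfolding is_leaf_def by auto
  qed
qed

end



context mg begin

lemma third_side:
  assumes "e \<in> E" "ends e \<inter> P \<noteq> {}" "ends e - (P \<union> Q) \<noteq> {}" "P \<inter> Q = {}"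
  shows "ends e \<inter> Q = {}"
proof (rule ccontr)
  assume "ends e \<inter> Q \<noteq> {}"
  then obtain b where b: "b \<in> ends e" "b \<in> Q" by blast
  obtain a where a: "a \<in> ends e" "a \<in> P" using assms(2) by blast
  obtain c where c: "c \<in> ends e" "c \<notin> P \<union> Q" using assms(3) by blast
  have "a \<noteq> b" using a b assms(4) by blast
  moreover have "c \<noteq> a" "c \<noteq> b" using a b c by auto
  ultimately have "card {a, b, c} = 3" by simp
  moreover have "card {a, b, c} \<le> card (ends e)" using a b c ends_fin[OF assms(1)] by (intro card_mono) auto
  ultimately show False using ends_le2[OF assms(1)] by simp
qed

lemma Gdisj:
  assumes "Y \<subseteq> E" "connected_graph ends Y"
  shows "Z1 \<noteq> {} \<Longrightarrow> Z2 \<noteq> {} \<Longrightarrow> Z1 \<union> Z2 \<subseteq> Y \<Longrightarrow> verts ends Z1 \<inter> verts ends Z2 = {}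
         \<Longrightarrow> Delta ends (Z1 \<union> Z2) < Delta ends Y"
proof (induction "card (Y - (Z1 \<union> Z2))" arbitrary: Z1 Z2 rule: less_induct)
  case less
  note ne1 = less(2) and ne2 = less(3) and sub = less(4) and dj = less(5)
  let ?Z = "Z1 \<union> Z2"
  show ?case
  proof (cases "?Z = Y")
    case True
    have "closed Z1 Y" unfolding closed_def
    proof (intro conjI ballI impI)
      show "Z1 \<subseteq> Y" using sub by blast
      fix x f assume x: "x \<in> Z1" and f: "f \<in> Y" and ne: "ends x \<inter> ends f \<noteq> {}"
      show "f \<in> Z1"
      proof (rule ccontr)
        assume "f \<notin> Z1"
        then have "f \<in> Z2" using f True by blast
        then have "ends f \<subseteq> verts ends Z2" by (auto simp: verts_def)
        moreover have "ends x \<subseteq> verts ends Z1" using x by (auto simp: verts_def)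
        ultimately show False using ne dj by blast
      qed
    qed
    then have "Z1 = Y" using conn_closed[OF assms(2)] ne1 by blast
    then have "Z2 \<subseteq> Z1" using True by blast
    then obtain z where z: "z \<in> Z2" "z \<in> Z1" using ne2 by blast
    then obtain v where "v \<in> ends z" using ends_ne sub assms(1) by blast
    then show ?thesis using z dj in_vertsI by blast
  next
    case False
    then obtain e where e: "e \<in> Y - ?Z" "ends e \<inter> verts ends ?Z \<noteq> {}"
      using adj_edge[OF assms(2) sub] ne1 by blast
    have eE: "e \<in> E" using e assms(1) by blast
    have ZE: "?Z \<subseteq> E" using sub assms(1) by blast
    have lt: "card (Y - insert e ?Z) < card (Y - ?Z)"
    proof -
      have eq: "Y - insert e ?Z = (Y - ?Z) - {e}" by blast
      have "finite (Y - ?Z)" using fin_sub[OF assms(1)] by simp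
      then have "card ((Y - ?Z) - {e}) < card (Y - ?Z)" using e(1) by (intro card_Diff1_less)
      then show ?thesis unfolding eq .
    qed
    have DI: "Delta ends (insert e ?Z) = Delta ends ?Z + 1 - int (card (ends e - verts ends ?Z))"
      using Delta_insert[OF ZE eE] e(1) by blast
    show ?thesis
    proof (cases "ends e \<subseteq> verts ends ?Z")
      case True
      then have "ends e - verts ends ?Z = {}" by blast
      then have "card (ends e - verts ends ?Z) = 0" by (simp only: card.empty)
      then have "Delta ends (insert e ?Z) = Delta ends ?Z + 1" using DI by simp
      moreover have "Delta ends (insert e ?Z) \<le> Delta ends Y"
        using G1[OF assms, of "insert e ?Z"] e(1) sub by blast
      ultimately show ?thesis by linarith
    next
      case False
      then have "ends e - verts ends ?Z \<noteq> {}" by blast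
      then have "card (ends e - verts ends ?Z) \<noteq> 0" using ends_fin[OF eE] by simp
      then have "card (ends e - verts ends ?Z) = 1" using lost_le1[OF eE e(2)] by linarith
      then have Deq: "Delta ends (insert e ?Z) = Delta ends ?Z" using DI by simp
      have out: "ends e - (verts ends Z1 \<union> verts ends Z2) \<noteq> {}" using False verts_Un by blast
      have VZ: "verts ends ?Z = verts ends Z1 \<union> verts ends Z2" by (rule verts_Un)
      show ?thesis
      proof (cases "ends e \<inter> verts ends Z1 \<noteq> {}")
        case True
        have "ends e \<inter> verts ends Z2 = {}" using third_side[OF eE True out dj] .
        then have dj': "verts ends (insert e Z1) \<inter> verts ends Z2 = {}" using dj by (auto simp: verts_insert)
        have eqZ: "insert e Z1 \<union> Z2 = insert e ?Z" by blast
        have "Delta ends (insert e Z1 \<union> Z2) < Delta ends Y"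
          using less(1)[of "insert e Z1" Z2] lt eqZ dj' ne2 sub e(1) by auto
        then show ?thesis using Deq eqZ by simp
      next
        case False
        then have T2: "ends e \<inter> verts ends Z2 \<noteq> {}" using e(2) VZ by blast
        have out': "ends e - (verts ends Z2 \<union> verts ends Z1) \<noteq> {}" using out by blast
        have "ends e \<inter> verts ends Z1 = {}" using third_side[OF eE T2 out'] dj by blast
        then have dj': "verts ends Z1 \<inter> verts ends (insert e Z2) = {}" using dj by (auto simp: verts_insert)
        have eqZ: "Z1 \<union> insert e Z2 = insert e ?Z" by blast
        have "Delta ends (Z1 \<union> insert e Z2) < Delta ends Y"
          using less(1)[of Z1 "insert e Z2"] lt eqZ dj' ne1 sub e(1) by auto
        then show ?thesis using Deq eqZ by simp
      qed
    qed
  qed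
qed

end



context mg begin

lemma adj_sym: "(a, b) \<in> adj ends X \<Longrightarrow> (b, a) \<in> adj ends X"
  by (auto simp: adj_def)

lemma trancl_adj_sym: "(a, b) \<in> (adj ends X)\<^sup>+ \<Longrightarrow> (b, a) \<in> (adj ends X)\<^sup>+"
proof -
  have "sym (adj ends X)" by (auto simp: adj_def sym_def)
  then have "sym ((adj ends X)\<^sup>+)" by (rule sym_trancl)
  then show "(a, b) \<in> (adj ends X)\<^sup>+ \<Longrightarrow> (b, a) \<in> (adj ends X)\<^sup>+" by (rule symD)
qed

lemma trancl_adj_in: "(a, b) \<in> (adj ends X)\<^sup>+ \<Longrightarrow> b \<in> X"
  by (induction rule: trancl_induct) (auto simp: adj_def)

lemma comp_sub: "comp X e \<subseteq> X"
  unfolding comp_def using trancl_adj_in by blast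

lemma comp_self: "X \<subseteq> E \<Longrightarrow> e \<in> X \<Longrightarrow> e \<in> comp X e"
  using ends_ne[of e] unfolding comp_def adj_def by auto

lemma comp_closed: "closed (comp X e) X"
  unfolding closed_def
proof (intro conjI ballI impI)
  show "comp X e \<subseteq> X" by (rule comp_sub)
  fix f g assume f: "f \<in> comp X e" and g: "g \<in> X" and ne: "ends f \<inter> ends g \<noteq> {}"
  have "f \<in> X" using f comp_sub by blast
  then have fg: "(f, g) \<in> adj ends X" using g ne by (auto simp: adj_def)
  have ef: "(e, f) \<in> (adj ends X)\<^sup>+" using f by (simp add: comp_def)
  have "(e, g) \<in> (adj ends X)\<^sup>+" using ef fg by (rule trancl_into_trancl)
  then show "g \<in> comp X e" unfolding comp_def by simp
qed

lemma comp_eq: "f \<in> comp X e \<Longrightarrow> comp X f = comp X e"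
proof -
  assume f: "f \<in> comp X e"
  then have ef: "(e, f) \<in> (adj ends X)\<^sup>+" by (simp add: comp_def)
  then have fe: "(f, e) \<in> (adj ends X)\<^sup>+" by (rule trancl_adj_sym)
  show ?thesis unfolding comp_def
  proof (intro set_eqI iffI; simp)
    fix g assume "(f, g) \<in> (adj ends X)\<^sup>+" then show "(e, g) \<in> (adj ends X)\<^sup>+" using ef by (meson trancl_trans)
  next
    fix g assume "(e, g) \<in> (adj ends X)\<^sup>+" then show "(f, g) \<in> (adj ends X)\<^sup>+" using fe by (meson trancl_trans)
  qed
qed

lemma comp_conn:
  assumes "X \<subseteq> E" "e \<in> X"
  shows "connected_graph ends (comp X e)"
  unfolding connected_graph_def
proof (intro conjI ballI)
  show "comp X e \<noteq> {}" using comp_self[OF assms] by blast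
  fix f g assume f: "f \<in> comp X e" and g: "g \<in> comp X e"
  have "(f, e) \<in> (adj ends X)\<^sup>+" using f by (simp add: comp_def trancl_adj_sym)
  moreover have "(e, g) \<in> (adj ends X)\<^sup>+" using g by (simp add: comp_def)
  ultimately have "(f, g) \<in> (adj ends X)\<^sup>+" by (rule trancl_trans)
  then show "(f, g) \<in> (adj ends (comp X e))\<^sup>+" using closed_trancl[OF comp_closed _ f] by blast
qed

lemma closed_vdisj:
  assumes "closed C Y"
  shows "verts ends C \<inter> verts ends (Y - C) = {}"
proof (rule ccontr)
  assume "\<not> ?thesis"
  then obtain v a b where "a \<in> C" "b \<in> Y - C" "v \<in> ends a" "v \<in> ends b" by (auto simp: verts_def)
  then show False using assms unfolding closed_def by blast
qed

lemma comp_vdisj: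
  assumes "comp X e \<noteq> comp X f"
  shows "verts ends (comp X e) \<inter> verts ends (comp X f) = {}"
proof (rule ccontr)
  assume "\<not> ?thesis"
  then obtain v a b where a: "a \<in> comp X e" and b: "b \<in> comp X f" and v: "v \<in> ends a" "v \<in> ends b"
    by (auto simp: verts_def)
  have "b \<in> X" using b comp_sub by blast
  then have "b \<in> comp X e" using comp_closed[of X e] a v unfolding closed_def by blast
  then have "comp X b = comp X e" by (rule comp_eq)
  moreover have "comp X b = comp X f" using b by (rule comp_eq)
  ultimately show False using assms by simp
qed

lemma components_eq: "components ends X = comp X ` X"
  by (auto simp: components_def comp_def)

lemma sum_all_eq2:
  fixes f :: "'a \<Rightarrow> nat"
  assumes "finite V" "\<forall>v\<in>V. 2 \<le> f v" "sum f V = 2 * card V"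
  shows "\<forall>v\<in>V. f v = 2"
proof (rule ccontr)
  assume "\<not> ?thesis"
  then obtain a where "a \<in> V" "f a \<noteq> 2" by blast
  then have "\<exists>a\<in>V. (\<lambda>_. 2::nat) a < f a" using assms(2) by force
  then have "(\<Sum>v\<in>V. (2::nat)) < sum f V" using assms(1,2) by (intro sum_strict_mono_ex1) auto
  then show False using assms(3) by simp
qed

lemma Delta_single: "e \<in> E \<Longrightarrow> Delta ends {e} = 1 - int (card (ends e))"
  by (simp add: Delta_def verts_def)

lemma Cyc:
  "X \<subseteq> E \<Longrightarrow> X \<noteq> {} \<Longrightarrow> 0 \<le> Delta ends X \<Longrightarrow> has_cycle ends X"
proof (induction "card X" arbitrary: X rule: less_induct)
  case less
  note XE = less(2) and ne = less(3) and D0 = less(4)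
  have fX: "finite X" using fin_sub[OF XE] .
  show ?case
  proof (cases "\<exists>Y. Y \<subset> X \<and> Y \<noteq> {} \<and> 0 \<le> Delta ends Y")
    case True
    then obtain Y where Y: "Y \<subset> X" "Y \<noteq> {}" "0 \<le> Delta ends Y" by blast
    have "card Y < card X" using Y(1) fX by (rule psubset_card_mono[rotated])
    moreover have "Y \<subseteq> E" using Y(1) XE by blast
    ultimately have "has_cycle ends Y" using less(1)[of Y] Y(2,3) by simp
    then show ?thesis using Y(1) unfolding has_cycle_def by blast
  next
    case False
    have minY: "Delta ends Y < 0" if "Y \<subset> X" "Y \<noteq> {}" for Y
      using False that by (meson not_le)
    have edge: "ends e \<subseteq> verts ends (X - {e}) \<and> Delta ends X = 0" if e: "e \<in> X" "X - {e} \<noteq> {}" for e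
    proof -
      have sub: "X - {e} \<subseteq> E" using XE by blast
      have ins: "insert e (X - {e}) = X" using e by blast
      have "Delta ends X = Delta ends (X - {e}) + 1 - int (card (ends e - verts ends (X - {e})))"
        using Delta_insert[OF sub, of e] e XE ins by auto
      moreover have "Delta ends (X - {e}) < 0" using minY e by blast
      ultimately have c0: "card (ends e - verts ends (X - {e})) = 0" and "Delta ends X = 0" using D0 by linarith+
      moreover have "finite (ends e - verts ends (X - {e}))" using ends_fin e XE by blast
      ultimately show ?thesis using c0 by auto
    qed
    show ?thesis
    proof (cases "\<exists>e. X = {e}")
      case True
      then obtain e where Xe: "X = {e}" by blast
      have eE: "e \<in> E" using XE Xe by blast
      then have "card (ends e) = 1" using D0 Xe Delta_single ends_card by fastforce
      then obtain v where v: "ends e = {v}" using card_1_singletonE by blast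
      have lp: "is_loop ends e" using v by (simp add: is_loop_def)
      have "is_cycle ends X" unfolding is_cycle_def connected_graph_def
      proof (intro conjI ballI)
        show "X \<noteq> {}" using Xe by simp
        fix f g assume "f \<in> X" "g \<in> X"
        then have "(f, g) \<in> adj ends X" using Xe v by (auto simp: adj_def)
        then show "(f, g) \<in> (adj ends X)\<^sup>+" by blast
      next
        fix u assume "u \<in> verts ends X"
        then have u: "u = v" using Xe v by (simp add: verts_def)
        have e1: "{ea \<in> X. u \<in> ends ea \<and> \<not> is_loop ends ea} = {}" using Xe lp by auto
        have e2: "{ea \<in> X. u \<in> ends ea \<and> is_loop ends ea} = {e}" using Xe lp u v by auto
        show "degree ends X u = 2" unfolding degree_def e1 e2 by simp
      qed
      then show ?thesis unfolding has_cycle_def by blast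
    next
      case False
      then have big: "\<And>e. e \<in> X \<Longrightarrow> X - {e} \<noteq> {}" by blast
      obtain e0 where "e0 \<in> X" using ne by blast
      then have DX: "Delta ends X = 0" using edge[of e0] big[of e0] by simp
      have nl: "2 \<le> degree ends X v" if v: "v \<in> verts ends X" for v
      proof (rule degree_nonleaf[OF XE v])
        show "\<not> is_leaf ends X v"
        proof
          assume "is_leaf ends X v"
          then obtain e where e: "e \<in> X" "v \<in> ends e" "\<And>f. f \<in> X \<Longrightarrow> v \<in> ends f \<Longrightarrow> f = e"
            by (rule leaf_ends) blast
          have "v \<in> verts ends (X - {e})" using edge[OF e(1) big[OF e(1)]] e(2) by blast
          then obtain f where "f \<in> X - {e}" "v \<in> ends f" by (auto simp: verts_def)
          then show False using e(3) by blast
        qed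
      qed
      have cV: "card X = card (verts ends X)" using DX by (simp add: Delta_def)
      have deg2: "\<forall>v\<in>verts ends X. degree ends X v = 2"
        using sum_all_eq2[OF verts_fin[OF XE]] nl handshake[OF XE] cV by simp
      obtain e where e: "e \<in> X" using ne by blast
      have "comp X e = X"
      proof (rule ccontr)
        assume neq: "comp X e \<noteq> X"
        let ?C = "comp X e" and ?D = "X - comp X e"
        have Cne: "?C \<noteq> {}" using comp_self[OF XE e] by blast
        have Dne: "?D \<noteq> {}" using neq comp_sub[of X e] by blast
        have CX: "?C \<subset> X" using neq comp_sub[of X e] by blast
        have DX': "?D \<subset> X" using Cne comp_sub[of X e] by blast
        have vd: "verts ends ?C \<inter> verts ends ?D = {}" using closed_vdisj[OF comp_closed] .
        have "Delta ends (?C \<union> ?D) = Delta ends ?C + Delta ends ?D"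
          using Delta_Un_disj[OF _ _ vd] XE comp_sub[of X e] by blast
        moreover have "?C \<union> ?D = X" using comp_sub[of X e] by blast
        moreover have "Delta ends ?C < 0" using minY[OF CX Cne] .
        moreover have "Delta ends ?D < 0" using minY[OF DX' Dne] .
        ultimately show False using D0 by simp
      qed
      then have "connected_graph ends X" using comp_conn[OF XE e] by simp
      then have "is_cycle ends X" using deg2 by (simp add: is_cycle_def)
      then show ?thesis unfolding has_cycle_def by blast
    qed
  qed
qed

lemma cycle_Delta:
  assumes "X \<subseteq> E" "is_cycle ends X"
  shows "Delta ends X = 0" "X \<noteq> {}"
proof -
  have "(\<Sum>v\<in>verts ends X. degree ends X v) = (\<Sum>v\<in>verts ends X. 2)"
    using assms(2) by (intro sum.cong) (auto simp: is_cycle_def)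
  then have "2 * card X = 2 * card (verts ends X)" using handshake[OF assms(1)] by simp
  then show "Delta ends X = 0" by (simp add: Delta_def)
  show "X \<noteq> {}" using assms(2) by (simp add: is_cycle_def connected_graph_def)
qed

end



context mg begin

lemma inc_diff: "v \<notin> verts ends Y \<Longrightarrow> inc (Z - Y) v = inc Z v"
  by (auto simp: inc_def verts_def)

lemma CNT:
  assumes YE: "Y \<subseteq> E" and WE: "W \<subseteq> E" and dj: "Y \<inter> W = {}"
    and deg: "\<forall>v\<in>verts ends W - verts ends Y. 2 \<le> degree ends W v"
  shows "2 * card (verts ends W - verts ends Y) + card (verts ends W \<inter> verts ends Y) \<le> 2 * card W"
    and "Delta ends (Y \<union> W) = Delta ends Y + int (card W) - int (card (verts ends W - verts ends Y))"
proof -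
  let ?N = "verts ends W - verts ends Y" and ?S = "verts ends W \<inter> verts ends Y"
  have fV: "finite (verts ends W)" using verts_fin[OF WE] .
  have fN: "finite ?N" "finite ?S" using fV by auto
  have split: "verts ends W = ?N \<union> ?S" by blast
  have "(\<Sum>v\<in>verts ends W. degree ends W v) = (\<Sum>v\<in>?N. degree ends W v) + (\<Sum>v\<in>?S. degree ends W v)"
    using sum.union_disjoint[OF fN, of "degree ends W"] split by (metis Diff_disjoint inf_commute inf_left_commute inf_bot_right Int_Diff_disjoint)
  moreover have "(\<Sum>v\<in>?N. 2) \<le> (\<Sum>v\<in>?N. degree ends W v)" using deg by (intro sum_mono) auto
  moreover have "(\<Sum>v\<in>?S. 1) \<le> (\<Sum>v\<in>?S. degree ends W v)"
    using degree_pos[OF WE] by (intro sum_mono) auto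
  ultimately show "2 * card ?N + card ?S \<le> 2 * card W" using handshake[OF WE] by simp
  have "card (Y \<union> W) = card Y + card W" using dj fin_sub YE WE by (simp add: card_Un_disjoint)
  moreover have vu: "verts ends (Y \<union> W) = verts ends Y \<union> ?N" using verts_Un by blast
  have "card (verts ends (Y \<union> W)) = card (verts ends Y) + card ?N"
    unfolding vu using verts_fin[OF YE] fN(1) by (intro card_Un_disjoint) auto
  ultimately show "Delta ends (Y \<union> W) = Delta ends Y + int (card W) - int (card ?N)"
    by (simp add: Delta_def)
qed

lemma has_cycle_conn:
  assumes "A \<subseteq> E" "connected_graph ends A"
  shows "has_cycle ends A \<longleftrightarrow> 0 \<le> Delta ends A"
proof
  assume "has_cycle ends A"
  then obtain Y where Y: "Y \<subseteq> A" "is_cycle ends Y" by (auto simp: has_cycle_def)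
  have "Y \<subseteq> E" using Y assms by blast
  then have "Delta ends Y = 0" "Y \<noteq> {}" using cycle_Delta Y by auto
  then show "0 \<le> Delta ends A" using G1[OF assms Y(1)] by simp
next
  assume "0 \<le> Delta ends A"
  moreover have "A \<noteq> {}" using assms(2) by (simp add: connected_graph_def)
  ultimately show "has_cycle ends A" using Cyc assms(1) by blast
qed

lemma tc_aux:
  assumes AE: "A \<subseteq> E" and conn: "connected_graph ends A"
    and Y1: "Y1 \<subseteq> A" "is_cycle ends Y1" and Y2: "Y2 \<subseteq> A" "is_cycle ends Y2" and ns: "\<not> Y2 \<subseteq> Y1"
  shows "1 \<le> Delta ends A"
proof -
  let ?W = "Y2 - Y1"
  have Y1E: "Y1 \<subseteq> E" and Y2E: "Y2 \<subseteq> E" using Y1 Y2 AE by auto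
  have WE: "?W \<subseteq> E" using Y2E by blast
  have D1: "Delta ends Y1 = 0" using cycle_Delta[OF Y1E Y1(2)] by simp
  have deg: "\<forall>v\<in>verts ends ?W - verts ends Y1. 2 \<le> degree ends ?W v"
  proof
    fix v assume v: "v \<in> verts ends ?W - verts ends Y1"
    have "degree ends ?W v = degree ends Y2 v" using inc_eq_leaf_degree(1)[OF inc_diff] v by blast
    moreover have "v \<in> verts ends Y2" using v verts_mono[of ?W Y2] by blast
    ultimately show "2 \<le> degree ends ?W v" using Y2(2) by (simp add: is_cycle_def)
  qed
  have dj: "Y1 \<inter> ?W = {}" by blast
  note C1 = CNT(1)[OF Y1E WE dj deg] and C2 = CNT(2)[OF Y1E WE dj deg]
  have U: "Y1 \<union> ?W \<subseteq> A" using Y1 Y2 by blast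
  have Wne: "?W \<noteq> {}" using ns by blast
  show ?thesis
  proof (cases "verts ends ?W \<inter> verts ends Y1 = {}")
    case False
    then have "1 \<le> card (verts ends ?W \<inter> verts ends Y1)" using verts_fin[OF WE]
      by (simp add: Suc_le_eq card_gt_0_iff)
    then have "1 \<le> Delta ends (Y1 \<union> ?W)" using C1 C2 D1 by linarith
    moreover have "Delta ends (Y1 \<union> ?W) \<le> Delta ends A" using G1[OF AE conn U] Wne by blast
    ultimately show ?thesis by linarith
  next
    case True
    have Y1ne: "Y1 \<noteq> {}" using cycle_Delta[OF Y1E Y1(2)] by simp
    have "Delta ends (Y1 \<union> ?W) < Delta ends A"
      using Gdisj[OF AE conn Y1ne Wne U] True by blast
    moreover have "0 \<le> Delta ends (Y1 \<union> ?W)" using C1 C2 D1 by linarith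
    ultimately show ?thesis by linarith
  qed
qed

lemma two_cycles_conn:
  assumes AE: "A \<subseteq> E" and conn: "connected_graph ends A"
  shows "has_two_cycles ends A \<longleftrightarrow> 1 \<le> Delta ends A"
proof
  assume "has_two_cycles ends A"
  then obtain Y1 Y2 where Y: "Y1 \<subseteq> A" "Y2 \<subseteq> A" "Y1 \<noteq> Y2" "is_cycle ends Y1" "is_cycle ends Y2"
    unfolding has_two_cycles_def by blast
  show "1 \<le> Delta ends A"
  proof (cases "Y2 \<subseteq> Y1")
    case False
    then show ?thesis using tc_aux[OF AE conn Y(1,4) Y(2,5)] by blast
  next
    case True
    then have "\<not> Y1 \<subseteq> Y2" using Y(3) by blast
    then show ?thesis using tc_aux[OF AE conn Y(2,5) Y(1,4)] by blast
  qed
next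
  assume D1: "1 \<le> Delta ends A"
  have Ane: "A \<noteq> {}" using conn by (simp add: connected_graph_def)
  obtain Y1 where Y1: "Y1 \<subseteq> A" "is_cycle ends Y1" using Cyc[OF AE Ane] D1 by (auto simp: has_cycle_def)
  have "Y1 \<noteq> {}" using cycle_Delta Y1 AE by blast
  then obtain e where e: "e \<in> Y1" by blast
  have eA: "e \<in> A" using e Y1 by blast
  have eE: "e \<in> E" using eA AE by blast
  have ne: "A - {e} \<noteq> {}"
  proof
    assume "A - {e} = {}"
    then have "A = {e}" using eA by blast
    then have "Delta ends A = 1 - int (card (ends e))" using Delta_single[OF eE] by simp
    moreover have "1 \<le> card (ends e)" using ends_card[OF eE] by auto
    ultimately show False using D1 by linarith
  qed
  have sub: "A - {e} \<subseteq> E" using AE by blast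
  have "Delta ends A = Delta ends (A - {e}) + 1 - int (card (ends e - verts ends (A - {e})))"
    using Delta_insert[OF sub eE] eA by (simp add: insert_absorb)
  then have "0 \<le> Delta ends (A - {e})" using D1 by linarith
  then obtain Y2 where Y2: "Y2 \<subseteq> A - {e}" "is_cycle ends Y2" using Cyc[OF sub ne] by (auto simp: has_cycle_def)
  have "Y1 \<noteq> Y2" using e Y2(1) by blast
  then show "has_two_cycles ends A" unfolding has_two_cycles_def using Y1 Y2 by blast
qed

end



context mg begin

lemma submod:
  assumes "Y \<subseteq> E" "Z \<subseteq> E"
  shows "Delta ends Y + Delta ends Z \<le> Delta ends (Y \<union> Z) + Delta ends (Y \<inter> Z)"
proof -
  have fY: "finite Y" "finite Z" using fin_sub assms by auto
  have c: "card Y + card Z = card (Y \<union> Z) + card (Y \<inter> Z)" using card_Un_Int[OF fY] .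
  have fV: "finite (verts ends Y)" "finite (verts ends Z)" using verts_fin assms by auto
  have "card (verts ends Y) + card (verts ends Z) = card (verts ends Y \<union> verts ends Z) + card (verts ends Y \<inter> verts ends Z)"
    using card_Un_Int[OF fV] .
  moreover have "verts ends (Y \<union> Z) = verts ends Y \<union> verts ends Z" by (rule verts_Un)
  moreover have "card (verts ends (Y \<inter> Z)) \<le> card (verts ends Y \<inter> verts ends Z)"
    using fV by (intro card_mono) (auto simp: verts_def)
  ultimately have "card (verts ends (Y \<union> Z)) + card (verts ends (Y \<inter> Z)) \<le> card (verts ends Y) + card (verts ends Z)"
    by simp
  then show ?thesis using c unfolding Delta_def by linarith
qed

lemma kernel_props:
  assumes AE: "A \<subseteq> E" and conn: "connected_graph ends A" and D1: "1 \<le> Delta ends A"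
  shows "kernel ends A \<subseteq> A" "kernel ends A \<noteq> {}" "Delta ends (kernel ends A) = Delta ends A"
    "\<And>Y. Y \<subseteq> A \<Longrightarrow> Y \<noteq> {} \<Longrightarrow> Delta ends Y = Delta ends A \<Longrightarrow> kernel ends A \<subseteq> Y"
proof -
  define P where "P Y \<longleftrightarrow> Y \<subseteq> A \<and> Y \<noteq> {} \<and> Delta ends Y = Delta ends A" for Y
  have PA: "P A" using conn by (simp add: P_def connected_graph_def)
  obtain K where K: "P K" and Kmin: "\<And>Y. P Y \<Longrightarrow> card K \<le> card Y"
    using ex_has_least_nat[of P A card] PA by blast
  have KE: "K \<subseteq> E" using K AE by (auto simp: P_def)
  have fK: "finite K" using fin_sub[OF KE] .
  have Kle: "K \<subseteq> Y" if PY: "P Y" for Y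
  proof -
    have YE: "Y \<subseteq> E" using PY AE by (auto simp: P_def)
    have sm: "Delta ends K + Delta ends Y \<le> Delta ends (K \<union> Y) + Delta ends (K \<inter> Y)" using submod[OF KE YE] .
    have "Delta ends (K \<union> Y) \<le> Delta ends A" using G1[OF AE conn, of "K \<union> Y"] K PY by (auto simp: P_def)
    then have ge: "Delta ends A \<le> Delta ends (K \<inter> Y)" using sm K PY by (simp add: P_def)
    have ne: "K \<inter> Y \<noteq> {}"
    proof
      assume "K \<inter> Y = {}"
      then show False using ge D1 by simp
    qed
    have "Delta ends (K \<inter> Y) \<le> Delta ends A" using G1[OF AE conn, of "K \<inter> Y"] K ne by (auto simp: P_def)
    then have "P (K \<inter> Y)" using ge ne K by (auto simp: P_def)
    then have "card K \<le> card (K \<inter> Y)" by (rule Kmin)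
    moreover have "card (K \<inter> Y) \<le> card K" using fK by (intro card_mono) auto
    ultimately have "K \<inter> Y = K" using fK by (intro card_subset_eq) auto
    then show ?thesis by blast
  qed
  have kK: "kernel ends A = K" unfolding kernel_def
  proof (rule the_equality)
    show "K \<subseteq> A \<and> K \<noteq> {} \<and> Delta ends K = Delta ends A \<and>
      (\<forall>Y. Y \<subseteq> A \<and> Y \<noteq> {} \<and> Delta ends Y = Delta ends A \<longrightarrow> K \<subseteq> Y)"
      using K Kle by (auto simp: P_def)
  next
    fix X assume X: "X \<subseteq> A \<and> X \<noteq> {} \<and> Delta ends X = Delta ends A \<and>
      (\<forall>Y. Y \<subseteq> A \<and> Y \<noteq> {} \<and> Delta ends Y = Delta ends A \<longrightarrow> X \<subseteq> Y)"
    then have "X \<subseteq> K" using K by (auto simp: P_def)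
    moreover have "K \<subseteq> X" using Kle X by (auto simp: P_def)
    ultimately show "X = K" by blast
  qed
  show "kernel ends A \<subseteq> A" "kernel ends A \<noteq> {}" "Delta ends (kernel ends A) = Delta ends A"
    using K kK by (auto simp: P_def)
  show "\<And>Y. Y \<subseteq> A \<Longrightarrow> Y \<noteq> {} \<Longrightarrow> Delta ends Y = Delta ends A \<Longrightarrow> kernel ends A \<subseteq> Y"
    using Kle kK by (auto simp: P_def)
qed

lemma kernel_noleaf:
  assumes AE: "A \<subseteq> E" and conn: "connected_graph ends A" and D1: "1 \<le> Delta ends A"
  shows "\<not> is_leaf ends (kernel ends A) v"
proof
  let ?K = "kernel ends A"
  note kp = kernel_props[OF AE conn D1]
  assume "is_leaf ends ?K v"
  then obtain e where e: "e \<in> ?K" "v \<in> ends e" "\<not> is_loop ends e" "\<And>f. f \<in> ?K \<Longrightarrow> v \<in> ends f \<Longrightarrow> f = e"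
    by (rule leaf_ends) blast
  have KE: "?K \<subseteq> E" using kp(1) AE by blast
  have eE: "e \<in> E" using KE e by blast
  show False
  proof (cases "?K - {e} = {}")
    case True
    then have "?K = {e}" using e by blast
    then have "Delta ends ?K = 1 - int (card (ends e))" using Delta_single[OF eE] by simp
    moreover have "card (ends e) = 2" using ends_card[OF eE] e(3) by (auto simp: is_loop_def)
    ultimately show False using kp(3) D1 by simp
  next
    case False
    have sub: "?K - {e} \<subseteq> E" using KE by blast
    have "Delta ends ?K = Delta ends (?K - {e}) + 1 - int (card (ends e - verts ends (?K - {e})))"
      using Delta_insert[OF sub eE] e(1) by (simp add: insert_absorb)
    moreover have "v \<in> ends e - verts ends (?K - {e})" using e(2,4) by (auto simp: verts_def)
    then have "1 \<le> card (ends e - verts ends (?K - {e}))" using ends_fin[OF eE]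
      by (metis One_nat_def Suc_leI card_gt_0_iff empty_iff finite_Diff)
    ultimately have "Delta ends A \<le> Delta ends (?K - {e})" using kp(3) by linarith
    moreover have "Delta ends (?K - {e}) \<le> Delta ends A" using G1[OF AE conn, of "?K - {e}"] kp(1) False by blast
    ultimately have "?K \<subseteq> ?K - {e}" using kp(4)[of "?K - {e}"] kp(1) False by auto
    then show False using e(1) by blast
  qed
qed

lemma LK:
  assumes AE: "A \<subseteq> E" and conn: "connected_graph ends A"
    and Y: "Y \<subseteq> A" "Y \<noteq> {}" "Delta ends Y = Delta ends A"
    and Z: "Z \<subseteq> A" "\<forall>v\<in>verts ends Z. 2 \<le> degree ends Z v"
  shows "Z \<subseteq> Y"
proof (rule ccontr)
  assume nZ: "\<not> Z \<subseteq> Y"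
  let ?W = "Z - Y"
  have YE: "Y \<subseteq> E" and WE: "?W \<subseteq> E" using Y Z AE by auto
  have deg: "\<forall>v\<in>verts ends ?W - verts ends Y. 2 \<le> degree ends ?W v"
  proof
    fix v assume v: "v \<in> verts ends ?W - verts ends Y"
    have "degree ends ?W v = degree ends Z v" using inc_eq_leaf_degree(1)[OF inc_diff] v by blast
    moreover have "v \<in> verts ends Z" using v verts_mono[of ?W Z] by blast
    ultimately show "2 \<le> degree ends ?W v" using Z(2) by simp
  qed
  have dj: "Y \<inter> ?W = {}" by blast
  note C1 = CNT(1)[OF YE WE dj deg] and C2 = CNT(2)[OF YE WE dj deg]
  have U: "Y \<union> ?W \<subseteq> A" using Y Z by blast
  have Wne: "?W \<noteq> {}" using nZ by blast
  have "Delta ends (Y \<union> ?W) \<le> Delta ends A" using G1[OF AE conn U] Y(2) by blast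
  then have "card ?W \<le> card (verts ends ?W - verts ends Y)" using C2 Y(3) by linarith
  then have "card (verts ends ?W \<inter> verts ends Y) = 0" using C1 by linarith
  then have "verts ends ?W \<inter> verts ends Y = {}" using verts_fin[OF WE] by simp
  then have "Delta ends (Y \<union> ?W) < Delta ends A" using Gdisj[OF AE conn Y(2) Wne U] by blast
  then show False using C1 C2 Y(3) by linarith
qed

lemma DU:
  assumes "finite I" "\<forall>i\<in>I. f i \<subseteq> E"
    "\<forall>i\<in>I. \<forall>j\<in>I. i \<noteq> j \<longrightarrow> verts ends (f i) \<inter> verts ends (f j) = {}"
  shows "Delta ends (\<Union>i\<in>I. f i) = (\<Sum>i\<in>I. Delta ends (f i))"
proof -
  have "card (\<Union>i\<in>I. f i) = (\<Sum>i\<in>I. card (f i))"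
    using assms disj_edges fin_sub by (intro card_UN_disjoint) auto
  moreover have "verts ends (\<Union>i\<in>I. f i) = (\<Union>i\<in>I. verts ends (f i))" by (auto simp: verts_def)
  moreover have "card (\<Union>i\<in>I. verts ends (f i)) = (\<Sum>i\<in>I. card (verts ends (f i)))"
    using assms verts_fin by (intro card_UN_disjoint) auto
  ultimately show ?thesis unfolding Delta_def by (simp add: sum_subtractf)
qed

end



context mg begin

lemma compE:
  assumes "A \<in> components ends E"
  shows "A \<subseteq> E" "connected_graph ends A" "closed A E" "A \<noteq> {}"
proof -
  obtain e where e: "e \<in> E" "A = comp E e" using assms components_eq by auto
  show "A \<subseteq> E" using e comp_sub by blast
  show "connected_graph ends A" using e comp_conn by blast
  show "closed A E" using e comp_closed by blast
  show "A \<noteq> {}" using e comp_self by blast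
qed

lemma comp_disj:
  assumes "A \<in> components ends E" "B \<in> components ends E" "A \<noteq> B"
  shows "verts ends A \<inter> verts ends B = {}"
  using assms comp_vdisj components_eq by auto

lemma comps_fin: "finite (components ends E)"
  using finE components_eq by simp

lemma comp_of: "h \<in> E \<Longrightarrow> comp E h \<in> components ends E \<and> h \<in> comp E h"
  using components_eq comp_self by auto

lemma closed_inc: "closed C Y \<Longrightarrow> v \<in> verts ends C \<Longrightarrow> inc C v = inc Y v"
  unfolding closed_def inc_def verts_def by blast

lemma closed_in_comp:
  assumes "A \<in> components ends E" "X \<subseteq> E"
  shows "closed (X \<inter> A) X"
  using compE(3)[OF assms(1)] assms(2) unfolding closed_def by blast

definition KK :: "'e set" where
  "KK = (\<Union>A\<in>{A\<in>components ends E. 1 \<le> Delta ends A}. kernel ends A)"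

lemma core_KK: "core ends E = KK"
proof -
  have "{A\<in>components ends E. has_two_cycles ends A} = {A\<in>components ends E. 1 \<le> Delta ends A}"
    using two_cycles_conn compE by blast
  then show ?thesis unfolding core_def KK_def by simp
qed

lemma kern_C2:
  assumes "A \<in> components ends E" "1 \<le> Delta ends A"
  shows "kernel ends A \<subseteq> A" "kernel ends A \<noteq> {}" "Delta ends (kernel ends A) = Delta ends A"
    "\<And>Y. Y \<subseteq> A \<Longrightarrow> Y \<noteq> {} \<Longrightarrow> Delta ends Y = Delta ends A \<Longrightarrow> kernel ends A \<subseteq> Y"
    "\<And>v. \<not> is_leaf ends (kernel ends A) v"
  using kernel_props[OF compE(1,2)[OF assms(1)] assms(2)] kernel_noleaf[OF compE(1,2)[OF assms(1)] assms(2)]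
  by auto

lemma KK_E: "KK \<subseteq> E"
  using kern_C2(1) compE(1) unfolding KK_def by blast

lemma KK_cap:
  assumes "A \<in> components ends E" "1 \<le> Delta ends A"
  shows "KK \<inter> A = kernel ends A"
proof
  show "kernel ends A \<subseteq> KK \<inter> A" using assms kern_C2(1)[OF assms] unfolding KK_def by blast
  show "KK \<inter> A \<subseteq> kernel ends A"
  proof
    fix e assume e: "e \<in> KK \<inter> A"
    then obtain B where B: "B \<in> components ends E" "1 \<le> Delta ends B" "e \<in> kernel ends B"
      unfolding KK_def by blast
    have eB: "e \<in> B" using B kern_C2(1)[OF B(1,2)] by blast
    have "A = B"
    proof (rule ccontr)
      assume "A \<noteq> B"
      then have "verts ends A \<inter> verts ends B = {}" using comp_disj assms(1) B(1) by blast
      moreover obtain v where "v \<in> ends e" using ends_ne e KK_E by blast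
      ultimately show False using e eB in_vertsI by blast
    qed
    then show "e \<in> kernel ends A" using B by simp
  qed
qed

lemma kern_closed:
  assumes "A \<in> components ends E" "1 \<le> Delta ends A"
  shows "closed (kernel ends A) KK"
proof -
  have "closed (KK \<inter> A) KK" using closed_in_comp[OF assms(1) KK_E] .
  then show ?thesis using KK_cap[OF assms] by simp
qed

lemma P1: "cacti ends KK"
  unfolding cacti_def
proof (intro conjI ballI)
  fix v assume v: "v \<in> verts ends KK"
  then obtain e where e: "e \<in> KK" "v \<in> ends e" by (auto simp: verts_def)
  then obtain A where A: "A \<in> components ends E" "1 \<le> Delta ends A" "e \<in> kernel ends A"
    unfolding KK_def by blast
  have "v \<in> verts ends (kernel ends A)" using A(3) e(2) by (rule in_vertsI)
  then have "inc (kernel ends A) v = inc KK v" using closed_inc[OF kern_closed[OF A(1,2)]] by blast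
  then have "is_leaf ends KK v = is_leaf ends (kernel ends A) v" using inc_eq_leaf_degree(2) by metis
  then show "\<not> is_leaf ends KK v" using kern_C2(5)[OF A(1,2)] by simp
next
  fix C assume C: "C \<in> components ends KK"
  then obtain e where e: "e \<in> KK" "C = comp KK e" using components_eq by auto
  then obtain A where A: "A \<in> components ends E" "1 \<le> Delta ends A" "e \<in> kernel ends A"
    unfolding KK_def by blast
  let ?KA = "kernel ends A"
  note kp = kern_C2[OF A(1,2)]
  have CKA: "C \<subseteq> ?KA"
  proof
    fix f assume "f \<in> C"
    then have "(e, f) \<in> (adj ends KK)\<^sup>+" using e by (simp add: comp_def)
    then show "f \<in> ?KA" using closed_trancl[OF kern_closed[OF A(1,2)] _ A(3)] by blast
  qed
  have eC: "e \<in> C" using comp_self[OF KK_E e(1)] e(2) by simp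
  have Ccl: "closed C ?KA" using comp_closed[of KK e] e(2) CKA kp(1) unfolding closed_def
    using KK_cap[OF A(1,2)] by blast
  show "\<not> is_cycle ends C"
  proof
    assume cyc: "is_cycle ends C"
    have KAE: "?KA \<subseteq> E" using kp(1) compE(1)[OF A(1)] by blast
    have DC: "Delta ends C = 0" using cycle_Delta[OF _ cyc] CKA KAE by blast
    show False
    proof (cases "C = ?KA")
      case True
      then show False using DC kp(3) A(2) by simp
    next
      case False
      let ?D = "?KA - C"
      have Dne: "?D \<noteq> {}" using False CKA by blast
      have vd: "verts ends C \<inter> verts ends ?D = {}" using closed_vdisj[OF Ccl] .
      have "Delta ends (C \<union> ?D) = Delta ends C + Delta ends ?D"
        using Delta_Un_disj[OF _ _ vd] CKA KAE by blast
      moreover have "C \<union> ?D = ?KA" using CKA by blast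
      ultimately have "Delta ends ?D = Delta ends A" using DC kp(3) by simp
      then have "?KA \<subseteq> ?D" using kp(4)[of ?D] Dne kp(1) by blast
      then show False using eC A(3) by blast
    qed
  qed
qed

lemma P2:
  assumes HE: "H \<subseteq> E" and cH: "cacti ends H"
  shows "H \<subseteq> KK"
proof
  fix h assume h: "h \<in> H"
  define A where "A = comp E h"
  have A: "A \<in> components ends E" "h \<in> A" using comp_of[of h] h HE A_def by auto
  let ?HA = "H \<inter> A"
  have HAE: "?HA \<subseteq> E" using HE by blast
  have clHA: "closed ?HA H" using closed_in_comp[OF A(1) HE] .
  have incHA: "inc ?HA v = inc H v" if "v \<in> verts ends ?HA" for v using closed_inc[OF clHA that] .
  have lf: "\<forall>v\<in>verts ends ?HA. 2 \<le> degree ends ?HA v"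
  proof
    fix v assume v: "v \<in> verts ends ?HA"
    have vH: "v \<in> verts ends H" using v verts_mono[of ?HA H] by blast
    have "\<not> is_leaf ends H v" using cH vH by (simp add: cacti_def)
    then have "\<not> is_leaf ends ?HA v" using inc_eq_leaf_degree(2)[OF incHA[OF v]] by simp
    then show "2 \<le> degree ends ?HA v" using degree_nonleaf[OF HAE v] by blast
  qed
  have hHA: "h \<in> ?HA" using h A by blast
  show "h \<in> KK"
  proof (cases "1 \<le> Delta ends A")
    case True
    note kp = kern_C2[OF A(1) True]
    have "?HA \<subseteq> kernel ends A"
      using LK[OF compE(1,2)[OF A(1)] kp(1,2,3)] lf by blast
    then show ?thesis using hHA A(1) True unfolding KK_def by blast
  next
    case False
    have "(\<Sum>v\<in>verts ends ?HA. 2) \<le> (\<Sum>v\<in>verts ends ?HA. degree ends ?HA v)"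
      using lf by (intro sum_mono) auto
    then have cle: "card (verts ends ?HA) \<le> card ?HA" using handshake[OF HAE] by simp
    have "Delta ends ?HA \<le> Delta ends A" using G1[OF compE(1,2)[OF A(1)], of ?HA] hHA by blast
    then have "card ?HA = card (verts ends ?HA)" using cle False unfolding Delta_def by linarith
    then have deg2: "\<forall>v\<in>verts ends ?HA. degree ends ?HA v = 2"
      using sum_all_eq2[OF verts_fin[OF HAE]] lf handshake[OF HAE] by simp
    let ?C = "comp H h"
    have CH: "?C \<in> components ends H" using components_eq h by blast
    have CHA: "?C \<subseteq> ?HA"
    proof
      fix f assume "f \<in> ?C"
      then have "(h, f) \<in> (adj ends H)\<^sup>+" by (simp add: comp_def)
      then show "f \<in> ?HA" using closed_trancl[OF clHA _ hHA] by blast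
    qed
    have "is_cycle ends ?C" unfolding is_cycle_def
    proof (intro conjI ballI)
      show "connected_graph ends ?C" using comp_conn HE h by blast
      fix v assume v: "v \<in> verts ends ?C"
      have vHA: "v \<in> verts ends ?HA" using v verts_mono[OF CHA] by blast
      have "inc ?C v = inc H v" using closed_inc[OF comp_closed v] .
      also have "\<dots> = inc ?HA v" using incHA[OF vHA] by simp
      finally have "degree ends ?C v = degree ends ?HA v" by (rule inc_eq_leaf_degree(1))
      then show "degree ends ?C v = 2" using deg2 vHA by simp
    qed
    then show ?thesis using cH CH by (simp add: cacti_def)
  qed
qed

lemma KK_Delta: "Delta ends KK = (\<Sum>A\<in>{A\<in>components ends E. 1 \<le> Delta ends A}. Delta ends A)"
proof -
  let ?C2 = "{A\<in>components ends E. 1 \<le> Delta ends A}"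
  have "Delta ends KK = (\<Sum>A\<in>?C2. Delta ends (kernel ends A))"
    unfolding KK_def
  proof (rule DU)
    show "finite ?C2" using comps_fin by simp
    show "\<forall>i\<in>?C2. kernel ends i \<subseteq> E" using kern_C2(1) compE(1) by blast
    show "\<forall>i\<in>?C2. \<forall>j\<in>?C2. i \<noteq> j \<longrightarrow> verts ends (kernel ends i) \<inter> verts ends (kernel ends j) = {}"
    proof (intro ballI impI)
      fix i j assume i: "i \<in> ?C2" and j: "j \<in> ?C2" and ij: "i \<noteq> j"
      have "verts ends i \<inter> verts ends j = {}" using comp_disj i j ij by blast
      moreover have "verts ends (kernel ends i) \<subseteq> verts ends i" using verts_mono kern_C2(1) i by blast
      moreover have "verts ends (kernel ends j) \<subseteq> verts ends j" using verts_mono kern_C2(1) j by blast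
      ultimately show "verts ends (kernel ends i) \<inter> verts ends (kernel ends j) = {}" by blast
    qed
  qed
  also have "\<dots> = (\<Sum>A\<in>?C2. Delta ends A)" using kern_C2(3) by (intro sum.cong) auto
  finally show ?thesis .
qed

lemma P3: "Delta ends KK = Delta ends (remove_trees ends E)"
proof -
  let ?C1 = "{A\<in>components ends E. 0 \<le> Delta ends A}"
  let ?C2 = "{A\<in>components ends E. 1 \<le> Delta ends A}"
  have "{A\<in>components ends E. has_cycle ends A} = ?C1"
    using has_cycle_conn compE by blast
  then have rt: "remove_trees ends E = (\<Union>A\<in>?C1. A)" unfolding remove_trees_def by simp
  have "Delta ends (\<Union>A\<in>?C1. A) = (\<Sum>A\<in>?C1. Delta ends A)"
  proof (rule DU)
    show "finite ?C1" using comps_fin by simp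
    show "\<forall>i\<in>?C1. i \<subseteq> E" using compE(1) by blast
    show "\<forall>i\<in>?C1. \<forall>j\<in>?C1. i \<noteq> j \<longrightarrow> verts ends i \<inter> verts ends j = {}" using comp_disj by blast
  qed
  also have "\<dots> = (\<Sum>A\<in>?C2. Delta ends A)"
    using comps_fin by (intro sum.mono_neutral_right) auto
  finally show ?thesis using rt KK_Delta by simp
qed

lemma P4:
  assumes HE: "H \<subseteq> E" and cH: "cacti ends H" and DH: "Delta ends H = Delta ends (remove_trees ends E)"
  shows "H = KK"
proof -
  let ?C2 = "{A\<in>components ends E. 1 \<le> Delta ends A}"
  have HK: "H \<subseteq> KK" using P2[OF HE cH] .
  have Hu: "H = (\<Union>A\<in>?C2. H \<inter> A)"
  proof
    show "H \<subseteq> (\<Union>A\<in>?C2. H \<inter> A)"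
    proof
      fix h assume "h \<in> H"
      then obtain A where "A \<in> ?C2" "h \<in> kernel ends A" using HK unfolding KK_def by blast
      then show "h \<in> (\<Union>A\<in>?C2. H \<inter> A)" using \<open>h \<in> H\<close> kern_C2(1) by blast
    qed
  qed blast
  have "Delta ends (\<Union>A\<in>?C2. H \<inter> A) = (\<Sum>A\<in>?C2. Delta ends (H \<inter> A))"
  proof (rule DU)
    show "finite ?C2" using comps_fin by simp
    show "\<forall>i\<in>?C2. H \<inter> i \<subseteq> E" using HE by blast
    show "\<forall>i\<in>?C2. \<forall>j\<in>?C2. i \<noteq> j \<longrightarrow> verts ends (H \<inter> i) \<inter> verts ends (H \<inter> j) = {}"
    proof (intro ballI impI)
      fix i j assume i: "i \<in> ?C2" and j: "j \<in> ?C2" and ij: "i \<noteq> j"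
      have "verts ends i \<inter> verts ends j = {}" using comp_disj i j ij by blast
      moreover have "verts ends (H \<inter> i) \<subseteq> verts ends i" "verts ends (H \<inter> j) \<subseteq> verts ends j"
        using verts_mono by auto
      ultimately show "verts ends (H \<inter> i) \<inter> verts ends (H \<inter> j) = {}" by blast
    qed
  qed
  then have sumH: "Delta ends H = (\<Sum>A\<in>?C2. Delta ends (H \<inter> A))" using Hu by simp
  have le: "\<forall>A\<in>?C2. Delta ends (H \<inter> A) \<le> Delta ends A"
  proof
    fix A assume A: "A \<in> ?C2"
    show "Delta ends (H \<inter> A) \<le> Delta ends A"
    proof (cases "H \<inter> A = {}")
      case True then show ?thesis using A by simp
    next
      case False then show ?thesis using G1[OF compE(1,2), of A "H \<inter> A"] A by blast
    qed
  qed
  have eq: "\<forall>A\<in>?C2. Delta ends (H \<inter> A) = Delta ends A"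
  proof (rule ccontr)
    assume "\<not> ?thesis"
    then have "\<exists>A\<in>?C2. Delta ends (H \<inter> A) < Delta ends A" using le by force
    then have "(\<Sum>A\<in>?C2. Delta ends (H \<inter> A)) < (\<Sum>A\<in>?C2. Delta ends A)"
      using le comps_fin by (intro sum_strict_mono_ex1) auto
    then show False using sumH DH P3 KK_Delta by simp
  qed
  have "KK \<subseteq> H"
  proof
    fix e assume "e \<in> KK"
    then obtain A where A: "A \<in> ?C2" "e \<in> kernel ends A" unfolding KK_def by blast
    have ne: "H \<inter> A \<noteq> {}"
    proof
      assume "H \<inter> A = {}"
      then show False using eq A by force
    qed
    have "kernel ends A \<subseteq> H \<inter> A" using kern_C2(4)[of A "H \<inter> A"] A eq ne by blast
    then show "e \<in> H" using A by blast
  qed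
  then show ?thesis using HK by blast
qed

end

theorem mainTheorem6:
  fixes ends :: "'e \<Rightarrow> 'v set" and E F :: "'e set"
  assumes "multigraph ends E"
    and "\<exists>A\<in>components ends E. has_two_cycles ends A"
    and "F \<subseteq> E"
  shows "(F = core ends E \<longleftrightarrow>
            (cacti ends F \<and> (\<forall>H. H \<subseteq> E \<and> cacti ends H \<longrightarrow> H \<subseteq> F)))
       \<and> (F = core ends E \<longleftrightarrow>
            (cacti ends F \<and> Delta ends F = Delta ends (remove_trees ends E) \<and>
             (\<forall>H. H \<subseteq> E \<and> cacti ends H \<and> Delta ends H = Delta ends (remove_trees ends E)
                  \<longrightarrow> H = F)))"
proof -
  interpret mg ends E using assms(1) by unfold_locales
  have c: "core ends E = KK" by (rule core_KK)
  show ?thesis unfolding c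
  proof (rule conjI; rule iffI)
    assume "F = KK"
    then show "cacti ends F \<and> (\<forall>H. H \<subseteq> E \<and> cacti ends H \<longrightarrow> H \<subseteq> F)" using P1 P2 by blast
  next
    assume a: "cacti ends F \<and> (\<forall>H. H \<subseteq> E \<and> cacti ends H \<longrightarrow> H \<subseteq> F)"
    then have "KK \<subseteq> F" using P1 KK_E by blast
    moreover have "F \<subseteq> KK" using P2 a assms(3) by blast
    ultimately show "F = KK" by blast
  next
    assume "F = KK"
    then show "cacti ends F \<and> Delta ends F = Delta ends (remove_trees ends E) \<and>
             (\<forall>H. H \<subseteq> E \<and> cacti ends H \<and> Delta ends H = Delta ends (remove_trees ends E) \<longrightarrow> H = F)"
      using P1 P3 P4 by blast
  next
    assume a: "cacti ends F \<and> Delta ends F = Delta ends (remove_trees ends E) \<and>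
             (\<forall>H. H \<subseteq> E \<and> cacti ends H \<and> Delta ends H = Delta ends (remove_trees ends E) \<longrightarrow> H = F)"
    then show "F = KK" using P4 assms(3) by blast
  qed
qed



end
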